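(* Let $f=f(u,v)$ be a generalized timelike minimal surface with real Weierstrass data $(g_1,g_2,\hat{\omega}_1du,\hat{\omega}_2dv)$ and let $p=(0,0)$ be a non-degenerate singular point with $\operatorname{rank}(df_p)=1$ and $\hat\omega_2(p)=0$ at which $f$ is not a front. Put \[ a=\frac{(\hat{\omega}_2)_v}{\hat{\omega}_1}\left(\frac{g_1+g_2}{1+g_1^2}\right)^2(p),\qquad b=\frac{(\hat{\omega}_2)_{vv}}{2\hat{\omega}_1}\left(\frac{g_1+g_2}{1+g_1^2}\right)^2(p), \] $\tilde\eta=(av+bv^2)\partial_u+\partial_v$, $\xi=\partial_u$, and $C=\dfrac{(\hat{\omega}_2)_{vv}}{(\hat{\omega}_2)_v}(p)$. Then $\tilde\eta$ is a null vector field along the singular curve $v=0$ (i.e.\ $df(\tilde\eta)=0$ there), \[ \langle \xi f,\tilde\eta^2f\rangle_E(p)=\langle \xi f,\tilde\eta^3f\rangle_E(p)=0,\qquad \tilde\eta^3f(p)=C\,\tilde\eta^2f(p). \]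
   Context: $\mathbb{L}^3$ is $\mathbb{R}^3$ with the Lorentzian metric $\langle\,,\rangle=-dt^2+dx^2+dy^2$; $\langle\,,\rangle_E$ is the Euclidean inner product of $\mathbb{R}^3$. A generalized timelike minimal surface is a non-constant smooth map $f\colon\Sigma\to\mathbb{L}^3$ from a 2-manifold which is an immersion on an open dense subset and such that near each point there are local coordinates $(u,v)$ with $\langle f_u,f_u\rangle=\langle f_v,f_v\rangle=0$ and $f_{uv}=0$. In such coordinates $f(u,v)=\tfrac12\int_{u_0}^u(-1-g_1^2,1-g_1^2,2g_1)\hat{\omega}_1du+\tfrac12\int_{v_0}^v(1+g_2^2,1-g_2^2,-2g_2)\hat{\omega}_2dv+f(u_0,v_0)$, with $g_1,\hat\omega_1$ functions of $u$ and $g_2,\hat\omega_2$ functions of $v$ (real Weierstrass data). Standing assumption: $g_1,g_2$ take finite real values at every singular point. Such $f$ is a frontal with unit normal $n=(g_1+g_2,-g_1+g_2,1+g_1g_2)/\sqrt{(1-g_1g_2)^2+2(g_1+g_2)^2}$; $f$ is a front at $p$ if $(f,n)$ is an immersion at $p$. With $\lambda=\det(f_u,f_v,n)$, a singular point is non-degenerate if $d\lambda_p\neq0$. For a vector field $\tilde\eta$, $\tilde\eta^kf$ is the $k$-fold directional derivative $\tilde\eta\cdots\tilde\eta f$. *)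

theory Defs
  imports "HOL-Analysis.Analysis"
begin

definition smooth_on :: "real set \<Rightarrow> (real \<Rightarrow> real) \<Rightarrow> bool" where
  "smooth_on S g \<longleftrightarrow> (\<forall>k. \<forall>x\<in>S. ((deriv ^^ k) g) field_differentiable (at x))"

definition pd_u :: "(real \<times> real \<Rightarrow> 'a::real_normed_vector) \<Rightarrow> real \<times> real \<Rightarrow> 'a" where
  "pd_u h = (\<lambda>(u, v). vector_derivative (\<lambda>s. h (s, v)) (at u))"

definition pd_v :: "(real \<times> real \<Rightarrow> 'a::real_normed_vector) \<Rightarrow> real \<times> real \<Rightarrow> 'a" where
  "pd_v h = (\<lambda>(u, v). vector_derivative (\<lambda>t. h (u, t)) (at v))"

definition vf_apply :: "(real \<times> real \<Rightarrow> real \<times> real) \<Rightarrow> (real \<times> real \<Rightarrow> 'a::real_normed_vector)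
    \<Rightarrow> real \<times> real \<Rightarrow> 'a" where
  "vf_apply X h = (\<lambda>p. fst (X p) *\<^sub>R pd_u h p + snd (X p) *\<^sub>R pd_v h p)"

definition det3 :: "real^3 \<Rightarrow> real^3 \<Rightarrow> real^3 \<Rightarrow> real" where
  "det3 x y z = det (vector [x, y, z] :: real^3^3)"

definition tm_normal :: "(real \<Rightarrow> real) \<Rightarrow> (real \<Rightarrow> real) \<Rightarrow> real \<times> real \<Rightarrow> real^3" where
  "tm_normal g1 g2 = (\<lambda>(u, v).
     (1 / sqrt ((1 - g1 u * g2 v)\<^sup>2 + 2 * (g1 u + g2 v)\<^sup>2)) *\<^sub>R
       vector [g1 u + g2 v, - g1 u + g2 v, 1 + g1 u * g2 v])"

text \<open>(f,n) is an immersion at p: its differential (columns (f_u,n_u), (f_v,n_v)) is injective.\<close>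
definition is_front_at :: "(real \<times> real \<Rightarrow> real^3) \<Rightarrow> (real \<times> real \<Rightarrow> real^3) \<Rightarrow> real \<times> real \<Rightarrow> bool" where
  "is_front_at f n p \<longleftrightarrow>
     (\<forall>\<alpha> \<beta>. \<alpha> *\<^sub>R pd_u f p + \<beta> *\<^sub>R pd_v f p = 0 \<and> \<alpha> *\<^sub>R pd_u n p + \<beta> *\<^sub>R pd_v n p = 0
        \<longrightarrow> \<alpha> = 0 \<and> \<beta> = 0)"

end

theory Submission
  imports Defs
begin


lemma vec3_eq: "((vector [a,b,c] :: real^3) = vector [d,e,g]) \<longleftrightarrow> a=d \<and> b=e \<and> c=g"
  by (auto simp: vec_eq_iff forall_3)
lemma vec3_zero: "(0::real^3) = vector [0,0,0]"
  by (auto simp: vec_eq_iff forall_3)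
lemma vec3_scaleR: "r *\<^sub>R (vector [a,b,c] :: real^3) = vector [r*a, r*b, r*c]"
  by (auto simp: vec_eq_iff forall_3)
lemma vec3_add: "(vector [a,b,c] :: real^3) + vector [d,e,g] = vector [a+d, b+e, c+g]"
  by (auto simp: vec_eq_iff forall_3)
lemma vec3_inner: "inner (vector [a,b,c] :: real^3) (vector [d,e,g]) = a*d+b*e+c*g"
  by (simp add: inner_vec_def sum_3)
lemma vec3_det: "det3 (vector [a1,a2,a3]) (vector [b1,b2,b3]) (vector [c1,c2,c3]) =
   a1*b2*c3 - a1*b3*c2 - a2*b1*c3 + a2*b3*c1 + a3*b1*c2 - a3*b2*c1"
  by (simp add: det3_def det_3 algebra_simps)
lemma vec3_decomp: "(vector [a,b,c] :: real^3) = a *\<^sub>R vector [1,0,0] + b *\<^sub>R vector [0,1,0] + c *\<^sub>R vector [0,0,1]"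
  by (auto simp: vec_eq_iff forall_3)
lemma vec3_deriv:
  assumes "(p1 has_real_derivative d1) (at t)" "(p2 has_real_derivative d2) (at t)"
    "(p3 has_real_derivative d3) (at t)"
  shows "((\<lambda>t. vector [p1 t, p2 t, p3 t] :: real^3) has_vector_derivative vector [d1,d2,d3]) (at t)"
proof -
  have "((\<lambda>t. p1 t *\<^sub>R (vector [1,0,0]::real^3) + p2 t *\<^sub>R vector [0,1,0] + p3 t *\<^sub>R vector [0,0,1])
     has_vector_derivative (d1 *\<^sub>R (vector [1,0,0]::real^3) + d2 *\<^sub>R vector [0,1,0] + d3 *\<^sub>R vector [0,0,1])) (at t)"
    by (auto intro!: derivative_eq_intros assms)
  then show ?thesis by (simp only: vec3_decomp[symmetric])
qed
lemma smooth_D: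
  assumes "smooth_on S g" "x \<in> S"
  shows "((deriv ^^ k) g has_real_derivative (deriv ^^ Suc k) g x) (at x)"
  using assms unfolding smooth_on_def
  by (simp add: DERIV_deriv_iff_field_differentiable)


lemma vec3_expand: "(x::real^3) = vector [x$1, x$2, x$3]"
  by (auto simp: vec_eq_iff forall_3)
lemma det3_zero2: "det3 x 0 z = 0"
  apply (subst vec3_expand[of x]) apply (subst vec3_expand[of z])
  by (simp add: vec3_zero vec3_det)
lemma det3_scale2: "det3 x (c *\<^sub>R y) z = c * det3 x y z"
  by (simp add: det3_def det_3 algebra_simps)

lemma qpos: "0 < (1 - x*y)^2 + 2*(x+y)^2" for x y :: real
proof (cases "x + y = 0")
  case True
  then have "y = -x" by simp
  then have "(1 - x*y)^2 = (1 + x^2)^2" by (simp add: power2_eq_square)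
  moreover have "0 < (1 + x^2)^2" by (smt (verit) zero_le_power2 zero_less_power2)
  ultimately show ?thesis by (smt (verit) zero_le_power2)
next
  case False
  then have "0 < (x+y)^2" by simp
  then show ?thesis by (smt (verit) zero_le_power2)
qed

lemma det3_cont:
  assumes "isCont p1 x" "isCont p2 x" "isCont p3 x" "isCont q1 x" "isCont q2 x" "isCont q3 x"
    "isCont s1 x" "isCont s2 x" "isCont s3 x"
  shows "isCont (\<lambda>t. det3 (vector [p1 t, p2 t, p3 t]) (vector [q1 t, q2 t, q3 t]) (vector [s1 t, s2 t, s3 t])) x"
  unfolding vec3_det using assms by (intro continuous_intros)

lemma vf_at: "vf_apply X h p = fst (X p) *\<^sub>R pd_u h p + snd (X p) *\<^sub>R pd_v h p"
  by (simp add: vf_apply_def)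


theorem lemma4p5:
  fixes g1 w1 g2 w2 :: "real \<Rightarrow> real"
    and F1 F2 :: "real \<Rightarrow> real^3"
    and f :: "real \<times> real \<Rightarrow> real^3"
    and I1 I2 :: "real set"
  assumes I1: "open I1" "0 \<in> I1"
    and I2: "open I2" "0 \<in> I2"
    and smooth: "smooth_on I1 g1" "smooth_on I1 w1" "smooth_on I2 g2" "smooth_on I2 w2"
    and F1: "\<And>u. u \<in> I1 \<Longrightarrow> (F1 has_vector_derivative
               ((w1 u / 2) *\<^sub>R vector [- 1 - (g1 u)\<^sup>2, 1 - (g1 u)\<^sup>2, 2 * g1 u])) (at u)"
    and F2: "\<And>v. v \<in> I2 \<Longrightarrow> (F2 has_vector_derivative
               ((w2 v / 2) *\<^sub>R vector [1 + (g2 v)\<^sup>2, 1 - (g2 v)\<^sup>2, - 2 * g2 v])) (at v)"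
    and f_def: "f = (\<lambda>(u, v). F1 u + F2 v)"
    and nondeg: "(\<lambda>p. det3 (pd_u f p) (pd_v f p) (tm_normal g1 g2 p)) = lam"
                "lam (0, 0) = 0"
                "(pd_u lam (0, 0), pd_v lam (0, 0)) \<noteq> (0, 0)"
    and rank1: "dim (span {pd_u f (0, 0), pd_v f (0, 0)}) = 1"
    and w2_zero: "w2 0 = 0"
    and not_front: "\<not> is_front_at f (tm_normal g1 g2) (0, 0)"
    and a_def: "a = deriv w2 0 / w1 0 * ((g1 0 + g2 0) / (1 + (g1 0)\<^sup>2))\<^sup>2"
    and b_def: "b = (deriv ^^ 2) w2 0 / (2 * w1 0) * ((g1 0 + g2 0) / (1 + (g1 0)\<^sup>2))\<^sup>2"
    and eta_def: "\<eta> = (\<lambda>(u::real, v::real). (a * v + b * v\<^sup>2, 1::real))"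
    and xi_def: "\<xi> = (\<lambda>(u::real, v::real). (1::real, 0::real))"
    and C_def: "C = (deriv ^^ 2) w2 0 / deriv w2 0"
  shows "(\<forall>u\<in>I1. vf_apply \<eta> f (u, 0) = 0)
    \<and> inner (vf_apply \<xi> f (0, 0)) ((vf_apply \<eta> ^^ 2) f (0, 0)) = 0
    \<and> inner (vf_apply \<xi> f (0, 0)) ((vf_apply \<eta> ^^ 3) f (0, 0)) = 0
    \<and> (vf_apply \<eta> ^^ 3) f (0, 0) = C *\<^sub>R (vf_apply \<eta> ^^ 2) f (0, 0)"
proof -
  define \<phi> where "\<phi> = (\<lambda>v::real. a * v + b * v\<^sup>2)"
  define x1 where "x1 = (\<lambda>u. w1 u / 2 * (- 1 - (g1 u)\<^sup>2))"
  define x2 where "x2 = (\<lambda>u. w1 u / 2 * (1 - (g1 u)\<^sup>2))"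
  define x3 where "x3 = (\<lambda>u. w1 u / 2 * (2 * g1 u))"
  define y1 where "y1 = (\<lambda>v. w2 v / 2 * (1 + (g2 v)\<^sup>2))"
  define y2 where "y2 = (\<lambda>v. w2 v / 2 * (1 - (g2 v)\<^sup>2))"
  define y3 where "y3 = (\<lambda>v. w2 v / 2 * (- 2 * g2 v))"
  define y1' where "y1' = (\<lambda>v. deriv w2 v / 2 * (1 + (g2 v)\<^sup>2) + w2 v / 2 * (2 * g2 v * deriv g2 v))"
  define y2' where "y2' = (\<lambda>v. deriv w2 v / 2 * (1 - (g2 v)\<^sup>2) - w2 v / 2 * (2 * g2 v * deriv g2 v))"
  define y3' where "y3' = (\<lambda>v. deriv w2 v / 2 * (- 2 * g2 v) + w2 v / 2 * (- 2 * deriv g2 v))"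
  define X where "X = (\<lambda>u. vector [x1 u, x2 u, x3 u] :: real^3)"
  define Y where "Y = (\<lambda>v. vector [y1 v, y2 v, y3 v] :: real^3)"
  have dw1: "\<And>u. u \<in> I1 \<Longrightarrow> (w1 has_real_derivative deriv w1 u) (at u)"
    using smooth_D[OF smooth(2), of _ 0] by simp
  have dg1: "\<And>u. u \<in> I1 \<Longrightarrow> (g1 has_real_derivative deriv g1 u) (at u)"
    using smooth_D[OF smooth(1), of _ 0] by simp
  have dw2: "\<And>u. u \<in> I2 \<Longrightarrow> (w2 has_real_derivative deriv w2 u) (at u)"
    using smooth_D[OF smooth(4), of _ 0] by simp
  have dg2: "\<And>u. u \<in> I2 \<Longrightarrow> (g2 has_real_derivative deriv g2 u) (at u)"
    using smooth_D[OF smooth(3), of _ 0] by simp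
  have ddw2: "(deriv w2 has_real_derivative (deriv ^^ 2) w2 0) (at 0)"
    using smooth_D[OF smooth(4) I2(2), of 1] by (simp add: numeral_2_eq_2)
  have ddg2: "(deriv g2 has_real_derivative (deriv ^^ 2) g2 0) (at 0)"
    using smooth_D[OF smooth(3) I2(2), of 1] by (simp add: numeral_2_eq_2)
  have F1': "\<And>u. u \<in> I1 \<Longrightarrow> (F1 has_vector_derivative X u) (at u)"
    using F1 by (simp add: X_def x1_def x2_def x3_def vec3_scaleR)
  have F2': "\<And>v. v \<in> I2 \<Longrightarrow> (F2 has_vector_derivative Y v) (at v)"
    using F2 by (simp add: Y_def y1_def y2_def y3_def vec3_scaleR)
  have fu: "pd_u f (u, v) = X u" if "u \<in> I1" for u v
  proof -
    have "((\<lambda>s. F1 s + F2 v) has_vector_derivative X u) (at u)"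
      using F1'[OF that] by (simp add: has_vector_derivative_add_const)
    then show ?thesis by (simp add: pd_u_def f_def vector_derivative_at)
  qed
  have fv: "pd_v f (u, v) = Y v" if "v \<in> I2" for u v
  proof -
    have "((\<lambda>s. F1 u + F2 s) has_vector_derivative Y v) (at v)"
      using F2'[OF that] by (auto intro!: derivative_eq_intros)
    then show ?thesis by (simp add: pd_v_def f_def vector_derivative_at)
  qed
  have Y0: "Y 0 = 0"
    by (simp add: Y_def y1_def y2_def y3_def w2_zero vec3_zero)
  have H1eq: "vf_apply \<eta> f (u, v) = vector [\<phi> v * x1 u + y1 v, \<phi> v * x2 u + y2 v, \<phi> v * x3 u + y3 v]"
    if "u \<in> I1" "v \<in> I2" for u v
    using that by (simp add: vf_at eta_def fu fv \<phi>_def X_def Y_def vec3_scaleR vec3_add)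
  have conj1: "\<forall>u\<in>I1. vf_apply \<eta> f (u, 0) = 0"
    using I2 by (simp add: vf_at eta_def fv Y0)
  have dy1: "(y1 has_real_derivative y1' t) (at t)" if "t \<in> I2" for t
    unfolding y1_def y1'_def using dw2[OF that] dg2[OF that]
    by (auto intro!: derivative_eq_intros simp: field_simps power2_eq_square)
  have dy2: "(y2 has_real_derivative y2' t) (at t)" if "t \<in> I2" for t
    unfolding y2_def y2'_def using dw2[OF that] dg2[OF that]
    by (auto intro!: derivative_eq_intros simp: field_simps power2_eq_square)
  have dy3: "(y3 has_real_derivative y3' t) (at t)" if "t \<in> I2" for t
    unfolding y3_def y3'_def using dw2[OF that] dg2[OF that]
    by (auto intro!: derivative_eq_intros simp: field_simps power2_eq_square)
  have dphi: "(\<phi> has_real_derivative a + 2 * b * t) (at t)" for t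
    unfolding \<phi>_def by (auto intro!: derivative_eq_intros simp: field_simps power2_eq_square)
  have pdvH1: "pd_v (vf_apply \<eta> f) (0, t) = vector [(a + 2*b*t) * x1 0 + y1' t, (a + 2*b*t) * x2 0 + y2' t, (a + 2*b*t) * x3 0 + y3' t]"
    if "t \<in> I2" for t
  proof -
    have "((\<lambda>s. vector [\<phi> s * x1 0 + y1 s, \<phi> s * x2 0 + y2 s, \<phi> s * x3 0 + y3 s] :: real^3) has_vector_derivative
       vector [(a + 2*b*t) * x1 0 + y1' t, (a + 2*b*t) * x2 0 + y2' t, (a + 2*b*t) * x3 0 + y3' t]) (at t)"
      using dphi[of t] dy1[OF that] dy2[OF that] dy3[OF that] by (auto intro!: vec3_deriv derivative_eq_intros)
    then have "((\<lambda>s. vf_apply \<eta> f (0, s)) has_vector_derivative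
       vector [(a + 2*b*t) * x1 0 + y1' t, (a + 2*b*t) * x2 0 + y2' t, (a + 2*b*t) * x3 0 + y3' t]) (at t)"
      by (rule has_vector_derivative_transform_within_open[OF _ I2(1) that]) (simp add: H1eq I1(2))
    then show ?thesis by (simp add: pd_v_def vector_derivative_at)
  qed
  have "\<exists>d. (x1 has_real_derivative d) (at 0)"
    unfolding x1_def by (rule exI) (use dw1[OF I1(2)] dg1[OF I1(2)] in \<open>auto intro!: derivative_eq_intros\<close>)
  then obtain d1 where d1: "(x1 has_real_derivative d1) (at 0)" by blast
  have "\<exists>d. (x2 has_real_derivative d) (at 0)"
    unfolding x2_def by (rule exI) (use dw1[OF I1(2)] dg1[OF I1(2)] in \<open>auto intro!: derivative_eq_intros\<close>)
  then obtain d2 where d2: "(x2 has_real_derivative d2) (at 0)" by blast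
  have "\<exists>d. (x3 has_real_derivative d) (at 0)"
    unfolding x3_def by (rule exI) (use dw1[OF I1(2)] dg1[OF I1(2)] in \<open>auto intro!: derivative_eq_intros\<close>)
  then obtain d3 where d3: "(x3 has_real_derivative d3) (at 0)" by blast
  have pduH1: "pd_u (vf_apply \<eta> f) (0, t) = vector [\<phi> t * d1, \<phi> t * d2, \<phi> t * d3]"
    if "t \<in> I2" for t
  proof -
    have "((\<lambda>s. vector [\<phi> t * x1 s + y1 t, \<phi> t * x2 s + y2 t, \<phi> t * x3 s + y3 t] :: real^3) has_vector_derivative
       vector [\<phi> t * d1, \<phi> t * d2, \<phi> t * d3]) (at 0)"
      using d1 d2 d3 by (auto intro!: vec3_deriv derivative_eq_intros)
    then have "((\<lambda>s. vf_apply \<eta> f (s, t)) has_vector_derivative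
       vector [\<phi> t * d1, \<phi> t * d2, \<phi> t * d3]) (at 0)"
      by (rule has_vector_derivative_transform_within_open[OF _ I1(1) I1(2)]) (simp add: H1eq that)
    then show ?thesis by (simp add: pd_u_def vector_derivative_at)
  qed
  have X0ne: "X 0 \<noteq> 0"
  proof
    assume "X 0 = 0"
    then have "pd_u f (0,0) = 0" "pd_v f (0,0) = 0" using fu[OF I1(2)] fv[OF I2(2)] Y0 by auto
    then show False using rank1 by simp
  qed
  have W1ne: "w1 0 \<noteq> 0"
    using X0ne by (auto simp: X_def x1_def x2_def x3_def vec3_zero)
  define r where "r = (\<lambda>t. 1 / sqrt ((1 - g1 0 * g2 t)\<^sup>2 + 2 * (g1 0 + g2 t)\<^sup>2))"
  have nform: "tm_normal g1 g2 (0, t) = vector [r t * (g1 0 + g2 t), r t * (- g1 0 + g2 t), r t * (1 + g1 0 * g2 t)]" for t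
    by (simp add: tm_normal_def r_def vec3_scaleR)
  have r0: "r 0 > 0" unfolding r_def using qpos by simp
  have "\<exists>R. (r has_real_derivative R) (at 0)"
    unfolding r_def
    by (rule exI) (use dg2[OF I2(2)] qpos[of "g1 0" "g2 0"] in \<open>auto intro!: derivative_eq_intros\<close>)
  then obtain R where R: "(r has_real_derivative R) (at 0)" by blast
  have nv: "pd_v (tm_normal g1 g2) (0,0) = vector [R * (g1 0 + g2 0) + r 0 * deriv g2 0,
       R * (- g1 0 + g2 0) + r 0 * deriv g2 0, R * (1 + g1 0 * g2 0) + r 0 * (g1 0 * deriv g2 0)]"
  proof -
    have "((\<lambda>t. vector [r t * (g1 0 + g2 t), r t * (- g1 0 + g2 t), r t * (1 + g1 0 * g2 t)] :: real^3) has_vector_derivative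
       vector [R * (g1 0 + g2 0) + r 0 * deriv g2 0,
       R * (- g1 0 + g2 0) + r 0 * deriv g2 0, R * (1 + g1 0 * g2 0) + r 0 * (g1 0 * deriv g2 0)]) (at 0)"
      using R dg2[OF I2(2)] by (auto intro!: vec3_deriv derivative_eq_intros simp: algebra_simps)
    then show ?thesis by (simp add: pd_v_def nform vector_derivative_at)
  qed
  have G2': "deriv g2 0 = 0"
  proof -
    obtain \<alpha> \<beta> where ab: "\<alpha> *\<^sub>R pd_u f (0,0) + \<beta> *\<^sub>R pd_v f (0,0) = 0"
      "\<alpha> *\<^sub>R pd_u (tm_normal g1 g2) (0,0) + \<beta> *\<^sub>R pd_v (tm_normal g1 g2) (0,0) = 0"
      "\<not> (\<alpha> = 0 \<and> \<beta> = 0)"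
      using not_front unfolding is_front_at_def by blast
    have "\<alpha> *\<^sub>R X 0 = 0" using ab(1) fu[OF I1(2)] fv[OF I2(2)] Y0 by simp
    then have "\<alpha> = 0" using X0ne by simp
    then have "\<beta> \<noteq> 0" "\<beta> *\<^sub>R pd_v (tm_normal g1 g2) (0,0) = 0" using ab by auto
    then have "pd_v (tm_normal g1 g2) (0,0) = 0" by simp
    then have e: "R * (g1 0 + g2 0) + r 0 * deriv g2 0 = 0"
       "R * (- g1 0 + g2 0) + r 0 * deriv g2 0 = 0" "R * (1 + g1 0 * g2 0) + r 0 * (g1 0 * deriv g2 0) = 0"
      unfolding nv vec3_zero vec3_eq by auto
    from e(1,2) have "g1 0 * R = 0" by (simp add: algebra_simps)
    then have "g1 0 = 0 \<or> R = 0" by simp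
    then have "R = 0" using e(3) by auto
    then show ?thesis using e(1) r0 by simp
  qed
  have W2ne: "deriv w2 0 \<noteq> 0"
  proof
    assume W0: "deriv w2 0 = 0"
    have lamdef: "lam = (\<lambda>p. det3 (pd_u f p) (pd_v f p) (tm_normal g1 g2 p))"
      using nondeg(1) by simp
    have "(\<lambda>s. lam (s,0)) = (\<lambda>s. 0)"
      using fv[OF I2(2)] Y0 by (simp add: lamdef det3_zero2)
    then have lu: "pd_u lam (0,0) = 0"
      by (simp add: pd_u_def vector_derivative_at[OF has_vector_derivative_const])
    define B where "B = (\<lambda>t. vector [(1 + (g2 t)\<^sup>2)/2, (1 - (g2 t)\<^sup>2)/2, - g2 t] :: real^3)"
    have YB: "Y t = w2 t *\<^sub>R B t" for t
      by (simp add: Y_def B_def y1_def y2_def y3_def vec3_scaleR)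
    define D where "D = (\<lambda>t. det3 (X 0) (B t) (tm_normal g1 g2 (0,t)))"
    have lamD: "lam (0,t) = w2 t * D t" if "t \<in> I2" for t
      using that I1(2) by (simp add: lamdef fu fv YB D_def det3_scale2)
    have cg2: "isCont g2 0" using dg2[OF I2(2)] by (rule DERIV_isCont)
    have cr: "isCont r 0" using R by (rule DERIV_isCont)
    have cD: "isCont D 0"
      unfolding D_def X_def B_def nform
      by (intro det3_cont continuous_intros cg2 cr) auto
    obtain c where c: "\<forall>z. w2 z - w2 0 = c z * (z - 0)" "isCont c 0" "c 0 = 0"
      using dw2[OF I2(2)] W0 CARAT_DERIV[of w2 "0::real" 0] by auto
    have "((\<lambda>t. w2 t * D t) has_real_derivative 0) (at 0)"
      unfolding CARAT_DERIV
    proof (intro exI conjI allI)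
      fix z :: real
      show "w2 z * D z - w2 0 * D 0 = c z * D z * (z - 0)"
        using c(1)[rule_format, of z] w2_zero by simp
    qed (use c cD in \<open>auto intro!: continuous_intros\<close>)
    then have "((\<lambda>t. lam (0,t)) has_real_derivative 0) (at 0)"
      by (rule has_field_derivative_transform_within_open[OF _ I2(1) I2(2)]) (simp add: lamD)
    then have lv: "pd_v lam (0,0) = 0"
      by (simp add: pd_v_def has_real_derivative_iff_has_vector_derivative vector_derivative_at)
    show False using nondeg(3) lu lv by simp
  qed
  define W2 where "W2 = (deriv ^^ 2) w2 0"
  have ddy1: "(y1' has_real_derivative W2 / 2 * (1 + (g2 0)\<^sup>2)) (at 0)"
    unfolding y1'_def W2_def using ddw2 ddg2 dw2[OF I2(2)] dg2[OF I2(2)] G2' w2_zero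
    by (auto intro!: derivative_eq_intros)
  have ddy2: "(y2' has_real_derivative W2 / 2 * (1 - (g2 0)\<^sup>2)) (at 0)"
    unfolding y2'_def W2_def using ddw2 ddg2 dw2[OF I2(2)] dg2[OF I2(2)] G2' w2_zero
    by (auto intro!: derivative_eq_intros)
  have ddy3: "(y3' has_real_derivative W2 / 2 * (- 2 * g2 0)) (at 0)"
    unfolding y3'_def W2_def using ddw2 ddg2 dw2[OF I2(2)] dg2[OF I2(2)] G2' w2_zero
    by (auto intro!: derivative_eq_intros)
  have etaphi: "\<eta> (u, v) = (\<phi> v, 1)" for u v by (simp add: eta_def \<phi>_def)
  have H2eq: "vf_apply \<eta> (vf_apply \<eta> f) (0, t) = vector [\<phi> t * (\<phi> t * d1) + ((a + 2*b*t) * x1 0 + y1' t),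
     \<phi> t * (\<phi> t * d2) + ((a + 2*b*t) * x2 0 + y2' t), \<phi> t * (\<phi> t * d3) + ((a + 2*b*t) * x3 0 + y3' t)]"
    if "t \<in> I2" for t
    using that by (simp add: vf_at etaphi pduH1 pdvH1 vec3_scaleR vec3_add)
  have phi0: "\<phi> 0 = 0" by (simp add: \<phi>_def)
  have H2at0: "vf_apply \<eta> (vf_apply \<eta> f) (0, 0) = vector [a * x1 0 + y1' 0, a * x2 0 + y2' 0, a * x3 0 + y3' 0]"
    using H2eq[OF I2(2)] phi0 by simp
  have pdvH2: "pd_v (vf_apply \<eta> (vf_apply \<eta> f)) (0, 0) = vector [2 * b * x1 0 + W2 / 2 * (1 + (g2 0)\<^sup>2),
     2 * b * x2 0 + W2 / 2 * (1 - (g2 0)\<^sup>2), 2 * b * x3 0 + W2 / 2 * (- 2 * g2 0)]"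
  proof -
    have "((\<lambda>t. vector [\<phi> t * (\<phi> t * d1) + ((a + 2*b*t) * x1 0 + y1' t),
     \<phi> t * (\<phi> t * d2) + ((a + 2*b*t) * x2 0 + y2' t), \<phi> t * (\<phi> t * d3) + ((a + 2*b*t) * x3 0 + y3' t)] :: real^3)
       has_vector_derivative vector [2 * b * x1 0 + W2 / 2 * (1 + (g2 0)\<^sup>2),
     2 * b * x2 0 + W2 / 2 * (1 - (g2 0)\<^sup>2), 2 * b * x3 0 + W2 / 2 * (- 2 * g2 0)]) (at 0)"
      using dphi[of 0] ddy1 ddy2 ddy3 phi0 by (auto intro!: vec3_deriv derivative_eq_intros)
    then have "((\<lambda>t. vf_apply \<eta> (vf_apply \<eta> f) (0, t))
       has_vector_derivative vector [2 * b * x1 0 + W2 / 2 * (1 + (g2 0)\<^sup>2),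
     2 * b * x2 0 + W2 / 2 * (1 - (g2 0)\<^sup>2), 2 * b * x3 0 + W2 / 2 * (- 2 * g2 0)]) (at 0)"
      by (rule has_vector_derivative_transform_within_open[OF _ I2(1) I2(2)]) (simp add: H2eq)
    then show ?thesis by (simp add: pd_v_def vector_derivative_at)
  qed
  have E2: "(vf_apply \<eta> ^^ 2) f (0,0) = vector [a * x1 0 + y1' 0, a * x2 0 + y2' 0, a * x3 0 + y3' 0]"
    using H2at0 by (simp add: numeral_2_eq_2)
  have E3: "(vf_apply \<eta> ^^ 3) f (0,0) = vector [2 * b * x1 0 + W2 / 2 * (1 + (g2 0)\<^sup>2),
     2 * b * x2 0 + W2 / 2 * (1 - (g2 0)\<^sup>2), 2 * b * x3 0 + W2 / 2 * (- 2 * g2 0)]"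
    using pdvH2 by (simp add: numeral_3_eq_3 vf_at etaphi phi0)
  have E1: "vf_apply \<xi> f (0,0) = X 0"
    using I1(2) by (simp add: vf_at xi_def fu)
  have k: "1 + (g1 0)\<^sup>2 \<noteq> 0" by (smt (verit) zero_le_power2)
  have i2: "inner (X 0) ((vf_apply \<eta> ^^ 2) f (0,0)) = 0"
    unfolding E2 X_def x1_def x2_def x3_def y1'_def y2'_def y3'_def vec3_inner a_def
    using k W1ne by (simp add: w2_zero G2' field_simps) algebra
  have i3: "inner (X 0) ((vf_apply \<eta> ^^ 3) f (0,0)) = 0"
    unfolding E3 X_def x1_def x2_def x3_def vec3_inner b_def W2_def
    using k W1ne by (simp add: field_simps) algebra
  have e3: "(vf_apply \<eta> ^^ 3) f (0,0) = C *\<^sub>R (vf_apply \<eta> ^^ 2) f (0,0)"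
    unfolding E3 E2 x1_def x2_def x3_def y1'_def y2'_def y3'_def vec3_scaleR vec3_eq a_def b_def C_def W2_def
    using k W1ne W2ne by (simp add: w2_zero G2' field_simps)
  show ?thesis using conj1 i2 i3 e3 E1 by simp
qed


end
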